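(* Let $q\ge2$ be even and $n\ge1$. There exists a code $\mathcal{C}\subseteq\Sigma_q^n$ capable of correcting a reverse-complement duplication of arbitrary length (i.e. $RC_k^1(\boldsymbol{x})\cap RC_k^1(\boldsymbol{z})=\varnothing$ for all distinct $\boldsymbol{x},\boldsymbol{z}\in\mathcal{C}$ and all $k\ge1$) with at most $3\log_q n$ redundant symbols, i.e. $n-\log_q|\mathcal{C}|\le 3\log_q n$.
   Context: $\Sigma_q=\{0,\dots,q-1\}$. A complement operation is a fixed bijection $a\mapsto\overline{a}$ on $\Sigma_q$ with $\overline{a}\ne a$, $\overline{\overline{a}}=a$; $\boldsymbol{v}^{RC}=\overline{v_k}\cdots\overline{v_1}$ for $\boldsymbol{v}=v_1\cdots v_k$. For $\boldsymbol{x}=\boldsymbol{u}\boldsymbol{v}\boldsymbol{w}\in\Sigma_q^n$ with $|\boldsymbol{u}|=i-1$, $|\boldsymbol{v}|=k$, $RC_{k,i}(\boldsymbol{x})=\boldsymbol{u}\boldsymbol{v}\boldsymbol{v}^{RC}\boldsymbol{w}$, and $RC_k^1(\boldsymbol{x})=\{RC_{k,i}(\boldsymbol{x}):i\in[1,n-k+1]\}$ (empty if $k>n$). *)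

theory Defs
  imports Complex_Main
begin

definition words :: "nat \<Rightarrow> nat \<Rightarrow> nat list set" where
  "words q n = {x. length x = n \<and> set x \<subseteq> {0..<q}}"

definition is_complement :: "nat \<Rightarrow> (nat \<Rightarrow> nat) \<Rightarrow> bool" where
  "is_complement q c \<longleftrightarrow> (\<forall>a<q. c a < q \<and> c a \<noteq> a \<and> c (c a) = a)"

definition rc :: "(nat \<Rightarrow> nat) \<Rightarrow> nat list \<Rightarrow> nat list" where
  "rc c v = rev (map c v)"

definition RC_dup :: "(nat \<Rightarrow> nat) \<Rightarrow> nat \<Rightarrow> nat \<Rightarrow> nat list \<Rightarrow> nat list" where
  "RC_dup c k i x =
     (let u = take (i - 1) x; v = take k (drop (i - 1) x); w = drop (i - 1 + k) x
      in u @ v @ rc c v @ w)"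

definition RC_ball :: "(nat \<Rightarrow> nat) \<Rightarrow> nat \<Rightarrow> nat list \<Rightarrow> nat list set" where
  "RC_ball c k x = {RC_dup c k i x | i. 1 \<le> i \<and> i + k \<le> length x + 1}"

end

theory Submission
  imports Defs
begin

lemma greedy:
  assumes "finite V"
    and "\<forall>x\<in>V. card (insert x {z\<in>V. R x z}) \<le> d"
    and "\<forall>x z. R x z \<longrightarrow> R z x"
  shows "\<exists>I\<subseteq>V. (\<forall>x\<in>I. \<forall>z\<in>I. x \<noteq> z \<longrightarrow> \<not> R x z) \<and> card V \<le> d * card I"
  using assms(1,2)
proof (induction V rule: finite_psubset_induct)
  case (psubset V)
  show ?case
  proof (cases "V = {}")
    case True
    then show ?thesis by auto
  next
    case False
    then obtain x where x: "x \<in> V" by auto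
    define N where "N = insert x {z\<in>V. R x z}"
    define W where "W = V - N"
    have NV: "N \<subseteq> V" using x N_def by auto
    have WV: "W \<subset> V" using x W_def N_def by auto
    have "\<forall>y\<in>W. card (insert y {z\<in>W. R y z}) \<le> d"
    proof
      fix y assume y: "y \<in> W"
      have "card (insert y {z\<in>W. R y z}) \<le> card (insert y {z\<in>V. R y z})"
        by (rule card_mono) (use psubset.hyps in \<open>auto simp: W_def\<close>)
      also have "\<dots> \<le> d" using psubset.prems y WV by auto
      finally show "card (insert y {z\<in>W. R y z}) \<le> d" .
    qed
    then obtain I where I: "I \<subseteq> W" "\<forall>a\<in>I. \<forall>b\<in>I. a \<noteq> b \<longrightarrow> \<not> R a b"
      "card W \<le> d * card I" using psubset.IH[OF WV] by blast
    have xI: "x \<notin> I" using I(1) W_def N_def by auto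
    have fW: "finite W" using rev_finite_subset[OF psubset.hyps psubset_imp_subset[OF WV]] .
    have fI: "finite I" using finite_subset[OF I(1) fW] .
    have cV: "card V = card W + card N"
    proof -
      have fN: "finite N" using NV psubset.hyps finite_subset by blast
      have "card W = card V - card N" unfolding W_def using card_Diff_subset[OF fN NV] .
      moreover have "card N \<le> card V" using card_mono[OF psubset.hyps NV] .
      ultimately show ?thesis by simp
    qed
    have cN: "card N \<le> d" using psubset.prems x N_def by auto
    have indep: "\<forall>a\<in>insert x I. \<forall>b\<in>insert x I. a \<noteq> b \<longrightarrow> \<not> R a b"
    proof (intro ballI impI)
      fix a b assume a: "a \<in> insert x I" and b: "b \<in> insert x I" and ab: "a \<noteq> b"
      have xr: "\<not> R x w" if "w \<in> I" for w using that I(1) unfolding W_def N_def by auto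
      show "\<not> R a b"
      proof (cases "a = x")
        case True then show ?thesis using b ab xr by auto
      next
        case False
        then have aI: "a \<in> I" using a by auto
        show ?thesis
        proof (cases "b = x")
          case True then show ?thesis using aI xr assms(3) by blast
        next
          case False then show ?thesis using aI b ab I(2) by auto
        qed
      qed
    qed
    have "card V \<le> d * card (insert x I)"
      using cV cN I(3) xI fI by simp
    moreover have "insert x I \<subseteq> V" using x order_trans[OF I(1) psubset_imp_subset[OF WV]] by simp
    ultimately show ?thesis using indep by blast
  qed
qed

lemma recover:
  assumes "1 \<le> i" "i + k \<le> length z + 1"
  shows "take (i-1+k) (RC_dup c k i z) @ drop (i-1+2*k) (RC_dup c k i z) = z"
proof -
  have l1: "length (take (i-1) z) = i - 1" using assms by simp
  have l2: "length (take k (drop (i-1) z)) = k" using assms by simp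
  have l3: "length (rc c (take k (drop (i-1) z))) = k" using l2 by (simp add: rc_def)
  have "take (i-1+k) (RC_dup c k i z) = take (i-1) z @ take k (drop (i-1) z)"
    unfolding RC_dup_def Let_def using l1 l2 l3 by (simp add: take_append)
  moreover have "drop (i-1+2*k) (RC_dup c k i z) = drop (i-1+k) z"
    unfolding RC_dup_def Let_def using l1 l2 l3 by (simp add: drop_append mult_2)
  ultimately show ?thesis
    by (metis append_take_drop_id append.assoc add.commute drop_drop take_add)
qed

lemma ball_sub:
  "k \<ge> 1 \<Longrightarrow> RC_ball c k x \<subseteq> (\<lambda>i. RC_dup c k i x) ` {1..length x}"
proof
  fix y assume k: "k \<ge> 1" and "y \<in> RC_ball c k x"
  then obtain i where i: "1 \<le> i" "i + k \<le> length x + 1" "y = RC_dup c k i x"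
    unfolding RC_ball_def by blast
  then have "i \<in> {1..length x}" using k by simp
  then show "y \<in> (\<lambda>i. RC_dup c k i x) ` {1..length x}" using i(3) by blast
qed

lemma ball_card: assumes "k \<ge> 1" shows "card (RC_ball c k x) \<le> length x"
proof -
  have "card (RC_ball c k x) \<le> card ((\<lambda>i. RC_dup c k i x) ` {1..length x})"
    by (rule card_mono[OF _ ball_sub[OF assms]]) simp
  also have "\<dots> \<le> card {1..length x}" by (rule card_image_le) simp
  finally show ?thesis by simp
qed

lemma ball_empty: "k > length x \<Longrightarrow> RC_ball c k x = {}"
  unfolding RC_ball_def by auto

lemma preimage_sub:
  assumes "length z = n" "y \<in> RC_ball c k z" "k \<ge> 1"
  shows "z \<in> (\<lambda>i. take (i-1+k) y @ drop (i-1+2*k) y) ` {1..n}"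
proof -
  obtain i where i: "1 \<le> i" "i + k \<le> length z + 1" "y = RC_dup c k i z"
    using assms(2) unfolding RC_ball_def by auto
  then have "z = take (i-1+k) y @ drop (i-1+2*k) y" using recover by metis
  moreover have "i \<le> n" using i(2) assms(1,3) by linarith
  then have "i \<in> {1..n}" using i(1) by simp
  ultimately show ?thesis by blast
qed

lemma nbhd:
  assumes "x \<in> words q n" "n \<ge> 1"
  shows "card (insert x {z\<in>words q n. \<exists>k\<ge>1. RC_ball c k x \<inter> RC_ball c k z \<noteq> {}}) \<le> n^3"
proof -
  define F where "F = (\<lambda>y k. (\<lambda>i. take (i-1+k) y @ drop (i-1+2*k) (y::nat list)) ` {1..n})"
  define U where "U = (\<Union>k\<in>{1..n}. \<Union>y\<in>RC_ball c k x. F y k)"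
  have lx: "length x = n" using assms(1) by (simp add: words_def)
  have xU: "x \<in> U"
  proof -
    have "1 + 1 \<le> length x + 1" using lx assms(2) by simp
    then have b: "RC_dup c 1 1 x \<in> RC_ball c 1 x" unfolding RC_ball_def by blast
    have xF: "x \<in> F (RC_dup c 1 1 x) 1" unfolding F_def
      by (rule preimage_sub[OF lx b]) simp
    have kn: "(1::nat) \<in> {1..n}" using assms(2) by simp
    show ?thesis unfolding U_def by (rule UN_I[OF kn], rule UN_I[OF b], rule xF)
  qed
  have zU: "z \<in> U" if zw: "z \<in> words q n" and zk: "\<exists>k\<ge>1. RC_ball c k x \<inter> RC_ball c k z \<noteq> {}" for z
  proof -
    obtain k y where k: "k \<ge> 1" "y \<in> RC_ball c k x" "y \<in> RC_ball c k z"
      using zk by blast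
    have lz: "length z = n" using zw by (simp add: words_def)
    have "k \<le> n"
    proof (rule ccontr)
      assume "\<not> k \<le> n"
      then have "RC_ball c k z = {}" using ball_empty[of z k c] lz by simp
      then show False using k(3) by simp
    qed
    have zF: "z \<in> F y k" unfolding F_def by (rule preimage_sub[OF lz k(3) k(1)])
    have kn: "k \<in> {1..n}" using k(1) \<open>k \<le> n\<close> by simp
    show ?thesis unfolding U_def by (rule UN_I[OF kn], rule UN_I[OF k(2)], rule zF)
  qed
  have sub: "insert x {z\<in>words q n. \<exists>k\<ge>1. RC_ball c k x \<inter> RC_ball c k z \<noteq> {}} \<subseteq> U"
    using xU zU by blast
  have "card U \<le> (\<Sum>k\<in>{1..n}. card (\<Union>y\<in>RC_ball c k x. F y k))"
    unfolding U_def by (rule card_UN_le) simp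
  also have "\<dots> \<le> (\<Sum>k\<in>{1..n}. n * n)"
  proof (rule sum_mono)
    fix k assume kn: "k \<in> {1..n}"
    then have k1: "k \<ge> 1" by simp
    have fb: "finite (RC_ball c k x)"
      by (rule finite_subset[OF ball_sub[OF k1]]) simp
    have cF: "card (F y k) \<le> n" for y
    proof -
      have "card (F y k) \<le> card {1..n}" unfolding F_def by (rule card_image_le) simp
      then show ?thesis by simp
    qed
    have "card (\<Union>y\<in>RC_ball c k x. F y k) \<le> (\<Sum>y\<in>RC_ball c k x. card (F y k))"
      by (rule card_UN_le[OF fb])
    also have "\<dots> \<le> (\<Sum>y\<in>RC_ball c k x. n)"
      by (rule sum_mono) (rule cF)
    also have "\<dots> = card (RC_ball c k x) * n" by simp
    also have "\<dots> \<le> n * n" using ball_card[OF k1, of c x] lx by simp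
    finally show "card (\<Union>y\<in>RC_ball c k x. F y k) \<le> n * n" .
  qed
  also have "\<dots> = n^3" by (simp add: power3_eq_cube)
  finally have cU: "card U \<le> n^3" .
  have fU: "finite U" unfolding U_def
  proof (intro finite_UN_I)
    fix k y assume "k \<in> {1..n}"
    then have k1: "k \<ge> 1" by simp
    show "finite (RC_ball c k x)" by (rule finite_subset[OF ball_sub[OF k1]]) simp
    show "finite (F y k)" unfolding F_def by simp
  qed simp
  have "card (insert x {z\<in>words q n. \<exists>k\<ge>1. RC_ball c k x \<inter> RC_ball c k z \<noteq> {}}) \<le> card U"
    by (rule card_mono[OF fU sub])
  then show ?thesis using cU by linarith
qed

lemma card_words: "card (words q n) = q ^ n"
  unfolding words_def using card_lists_length_eq[of "{0..<q}" n]
  by (simp add: conj_commute)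

lemma finite_words: "finite (words q n)"
  unfolding words_def using finite_lists_length_eq[of "{0..<q}" n]
  by (simp add: conj_commute)

theorem lemma7:
  fixes q n :: nat and c :: "nat \<Rightarrow> nat"
  assumes "q \<ge> 2" and "even q" and "n \<ge> 1" and "is_complement q c"
  shows "\<exists>C \<subseteq> words q n. C \<noteq> {} \<and>
           (\<forall>x\<in>C. \<forall>z\<in>C. x \<noteq> z \<longrightarrow> (\<forall>k\<ge>1. RC_ball c k x \<inter> RC_ball c k z = {})) \<and>
           real n - log (real q) (real (card C)) \<le> 3 * log (real q) (real n)"
proof -
  define R where "R = (\<lambda>x z. \<exists>k\<ge>1. RC_ball c k x \<inter> RC_ball c k z \<noteq> {})"
  have sym: "\<forall>x z. R x z \<longrightarrow> R z x" unfolding R_def by blast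
  have nb: "\<forall>x\<in>words q n. card (insert x {z\<in>words q n. R x z}) \<le> n^3"
    using nbhd assms(3) unfolding R_def by blast
  obtain C where C: "C \<subseteq> words q n" "\<forall>x\<in>C. \<forall>z\<in>C. x \<noteq> z \<longrightarrow> \<not> R x z"
     "card (words q n) \<le> n^3 * card C"
    using greedy[OF finite_words nb sym] by blast
  have qn: "q ^ n \<le> n^3 * card C" using C(3) card_words by simp
  have qpos: "q ^ n > 0" using assms(1) by simp
  then have cpos: "card C > 0" using qn by (metis gr0I mult_0_right not_le)
  have "real q ^ n \<le> real n ^ 3 * real (card C)"
    using qn by (metis of_nat_le_iff of_nat_mult of_nat_power)
  then have "log (real q) (real q ^ n) \<le> log (real q) (real n ^ 3 * real (card C))"
    using assms(1,3) qpos cpos by (subst log_le_cancel_iff) auto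
  moreover have "log (real q) (real q ^ n) = real n" using assms(1) by (simp add: log_nat_power)
  moreover have "log (real q) (real n ^ 3 * real (card C)) = 3 * log (real q) (real n) + log (real q) (real (card C))"
    using assms cpos by (simp add: log_mult log_nat_power)
  ultimately have ineq: "real n - log (real q) (real (card C)) \<le> 3 * log (real q) (real n)" by linarith
  have "C \<noteq> {}" using cpos by auto
  moreover have "\<forall>x\<in>C. \<forall>z\<in>C. x \<noteq> z \<longrightarrow> (\<forall>k\<ge>1. RC_ball c k x \<inter> RC_ball c k z = {})"
    using C(2) unfolding R_def by blast
  ultimately show ?thesis using C(1) ineq by blast
qed

end
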